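(* Assume the Standing Assumption and fix $T>0$. Let $(\tau_l)_l\subseteq(0,\infty)$ with $\tau_l\to0$, and suppose that the piecewise constant velocity fields $\tilde v_{\tau_l}\in L_2(\tilde\gamma_{\tau_l};\mathbb{R}^d\times[0,T])$ converge weakly to some $\hat v\in L_2(\hat\gamma;\mathbb{R}^d\times[0,T])$, where $\hat\gamma$ is a curve in $\mathcal P_2(\mathbb{R}^d)$, i.e. $\int_0^T\int_{\mathbb{R}^d}\langle\phi(x,t),\tilde v_{\tau_l}(x,t)\rangle\,d\tilde\gamma_{\tau_l}(t)(x)\,dt\to\int_0^T\int_{\mathbb{R}^d}\langle\phi(x,t),\hat v(x,t)\rangle\,d\hat\gamma(t)(x)\,dt$ for all $\phi\in C_c^\infty(\mathbb{R}^d\times[0,T];\mathbb{R}^d)$. Then also $\int_0^T\int_{\mathbb{R}^d}\langle\phi(x,t),v_{\tau_l}(x,t)\rangle\,d\gamma_{\tau_l}(t)(x)\,dt\to\int_0^T\int_{\mathbb{R}^d}\langle\phi(x,t),\hat v(x,t)\rangle\,d\hat\gamma(t)(x)\,dt$ for all such $\phi$, i.e. $v_{\tau_l}$ converges weakly to $\hat v$.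
   Context: $\mathcal P_2(\mathbb{R}^d)$ is the set of Borel probability measures on $\mathbb{R}^d$ with finite second moment, equipped with the Wasserstein-2 distance $W_2$; $\mathcal P_2^{ac}(\mathbb{R}^d)$ is the subset of absolutely continuous measures. The metric slope is $|\partial\mathcal F|(\mu)=\limsup_{\nu\to\mu}\frac{(\mathcal F(\mu)-\mathcal F(\nu))^+}{W_2(\mu,\nu)}$. Standing Assumption: $\mathcal F:\mathcal P_2(\mathbb{R}^d)\to\mathbb{R}\cup\{+\infty\}$ is proper, lower semicontinuous with respect to narrow convergence, coercive, $\lambda$-convex along generalized geodesics (in the sense of Ambrosio–Gigli–Savaré, Def. 9.2.4) for some $\lambda\in\mathbb{R}$, and bounded from below; moreover $\mathrm{dom}(|\partial\mathcal F|)\subseteq\mathcal P_2^{ac}(\mathbb{R}^d)$, and the initial measure $\mu^0\in\mathcal P_2^{ac}(\mathbb{R}^d)$ satisfies $|\partial\mathcal F|(\mu^0)<\infty$. JKO scheme: $\mathrm{prox}_{\tau\mathcal F}(\hat\mu)=\operatorname{argmin}_{\mu}\{\tfrac12W_2^2(\mu,\hat\mu)+\tau\mathcal F(\mu)\}$; $\mu_\tau^0=\mu^0$, $\mu_\tau^{k+1}=\mathrm{prox}_{\tau\mathcal F}(\mu_\tau^k)$. Let $\mathcal T_\tau^k$ be the optimal transport map from $\mu_\tau^k$ to $\mu_\tau^{k+1}$ and $v_\tau^k=(\mathcal T_\tau^k-\mathrm{Id})/\tau$. Piecewise constant interpolation: $\tilde\gamma_\tau(k\tau+t\tau)=\mu_\tau^k$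 and $\tilde v_\tau(x,k\tau+t\tau)=v_\tau^k(x)$ for $t\in[0,1)$. Piecewise geodesic interpolation: $\gamma_\tau(k\tau+t\tau)=((1-t)\mathrm{Id}+t\mathcal T_\tau^k)_\#\mu_\tau^k$ and $v_\tau(x,k\tau+t\tau)=v_\tau^k\big(((1-t)\mathrm{Id}+t\mathcal T_\tau^k)^{-1}(x)\big)$ for $t\in[0,1]$. For a curve $\beta$, $L_2(\beta;\mathbb{R}^d\times[0,T])$ denotes square-integrable vector fields with respect to $\beta(t)\,dt$. *)

theory Defs
  imports "HOL-Probability.Probability"
begin

text \<open>R^d is modelled by an arbitrary Euclidean space 'a; Borel probability measures
  with finite second moment.\<close>

definition P2 :: "'a::euclidean_space measure \<Rightarrow> bool" where
  "P2 \<mu> \<longleftrightarrow> prob_space \<mu> \<and> sets \<mu> = sets borel \<and>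
     (\<integral>\<^sup>+ x. ennreal ((norm x)\<^sup>2) \<partial>\<mu>) < \<infinity>"

definition P2ac :: "'a::euclidean_space measure \<Rightarrow> bool" where
  "P2ac \<mu> \<longleftrightarrow> P2 \<mu> \<and> absolutely_continuous lborel \<mu>"

definition couplings :: "'a::euclidean_space measure \<Rightarrow> 'a measure \<Rightarrow> ('a \<times> 'a) measure set" where
  "couplings \<mu> \<nu> = {\<pi>. prob_space \<pi> \<and> sets \<pi> = sets borel \<and>
      distr \<pi> borel fst = \<mu> \<and> distr \<pi> borel snd = \<nu>}"

definition transport_cost :: "('a::euclidean_space \<times> 'a) measure \<Rightarrow> ennreal" where
  "transport_cost \<pi> = (\<integral>\<^sup>+ p. ennreal ((dist (fst p) (snd p))\<^sup>2) \<partial>\<pi>)"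

definition W2sq :: "'a::euclidean_space measure \<Rightarrow> 'a measure \<Rightarrow> ennreal" where
  "W2sq \<mu> \<nu> = (INF \<pi>\<in>couplings \<mu> \<nu>. transport_cost \<pi>)"

definition W2 :: "'a::euclidean_space measure \<Rightarrow> 'a measure \<Rightarrow> real" where
  "W2 \<mu> \<nu> = sqrt (enn2real (W2sq \<mu> \<nu>))"

definition optimal_coupling :: "'a::euclidean_space measure \<Rightarrow> 'a measure \<Rightarrow> ('a \<times> 'a) measure \<Rightarrow> bool" where
  "optimal_coupling \<mu> \<nu> \<pi> \<longleftrightarrow> \<pi> \<in> couplings \<mu> \<nu> \<and> transport_cost \<pi> = W2sq \<mu> \<nu>"

definition optimal_map :: "'a::euclidean_space measure \<Rightarrow> 'a measure \<Rightarrow> ('a \<Rightarrow> 'a) \<Rightarrow> bool" where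
  "optimal_map \<mu> \<nu> T \<longleftrightarrow> T \<in> borel_measurable borel \<and> distr \<mu> borel T = \<nu> \<and>
      (\<integral>\<^sup>+ x. ennreal ((dist (T x) x)\<^sup>2) \<partial>\<mu>) = W2sq \<mu> \<nu>"

definition narrow_conv :: "(nat \<Rightarrow> 'a::euclidean_space measure) \<Rightarrow> 'a measure \<Rightarrow> bool" where
  "narrow_conv \<mu>s \<mu> \<longleftrightarrow> (\<forall>f::'a \<Rightarrow> real. continuous_on UNIV f \<and> bounded (range f) \<longrightarrow>
      (\<lambda>n. \<integral>x. f x \<partial>(\<mu>s n)) \<longlonglongrightarrow> (\<integral>x. f x \<partial>\<mu>))"

definition dom_F :: "('a::euclidean_space measure \<Rightarrow> ereal) \<Rightarrow> 'a measure set" where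
  "dom_F F = {\<mu>. P2 \<mu> \<and> F \<mu> < \<infinity>}"

definition proper_fun :: "('a::euclidean_space measure \<Rightarrow> ereal) \<Rightarrow> bool" where
  "proper_fun F \<longleftrightarrow> (\<forall>\<mu>. P2 \<mu> \<longrightarrow> F \<mu> \<noteq> -\<infinity>) \<and> (\<exists>\<mu>. P2 \<mu> \<and> F \<mu> < \<infinity>)"

definition narrow_lsc :: "('a::euclidean_space measure \<Rightarrow> ereal) \<Rightarrow> bool" where
  "narrow_lsc F \<longleftrightarrow> (\<forall>\<mu>s \<mu>. (\<forall>n. P2 (\<mu>s n)) \<and> P2 \<mu> \<and> narrow_conv \<mu>s \<mu> \<longrightarrow>
      F \<mu> \<le> liminf (\<lambda>n. F (\<mu>s n)))"

definition coercive :: "('a::euclidean_space measure \<Rightarrow> ereal) \<Rightarrow> bool" where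
  "coercive F \<longleftrightarrow> (\<exists>\<tau>s>0. \<exists>\<mu>s. P2 \<mu>s \<and>
      (INF \<nu>\<in>{\<nu>. P2 \<nu>}. F \<nu> + ereal ((W2 \<nu> \<mu>s)\<^sup>2 / (2 * \<tau>s))) > -\<infinity>)"

definition bounded_below :: "('a::euclidean_space measure \<Rightarrow> ereal) \<Rightarrow> bool" where
  "bounded_below F \<longleftrightarrow> (\<exists>c::real. \<forall>\<mu>. P2 \<mu> \<longrightarrow> ereal c \<le> F \<mu>)"

definition three_plans :: "'a::euclidean_space measure \<Rightarrow> 'a measure \<Rightarrow> 'a measure \<Rightarrow> ('a \<times> 'a \<times> 'a) measure set" where
  "three_plans \<sigma> \<mu>2 \<mu>3 = {P. prob_space P \<and> sets P = sets borel \<and>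
      distr P borel fst = \<sigma> \<and> distr P borel (\<lambda>p. fst (snd p)) = \<mu>2 \<and>
      distr P borel (\<lambda>p. snd (snd p)) = \<mu>3}"

definition gen_geodesic :: "('a::euclidean_space \<times> 'a \<times> 'a) measure \<Rightarrow> real \<Rightarrow> 'a measure" where
  "gen_geodesic P t = distr P borel (\<lambda>p. (1 - t) *\<^sub>R fst (snd p) + t *\<^sub>R snd (snd p))"

definition gen_geod_convex :: "real \<Rightarrow> ('a::euclidean_space measure \<Rightarrow> ereal) \<Rightarrow> bool" where
  "gen_geod_convex lam F \<longleftrightarrow>
    (\<forall>\<sigma> \<mu>2 \<mu>3. \<sigma> \<in> dom_F F \<and> \<mu>2 \<in> dom_F F \<and> \<mu>3 \<in> dom_F F \<longrightarrow>
      (\<exists>P\<in>three_plans \<sigma> \<mu>2 \<mu>3.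
         optimal_coupling \<sigma> \<mu>2 (distr P borel (\<lambda>p. (fst p, fst (snd p)))) \<and>
         optimal_coupling \<sigma> \<mu>3 (distr P borel (\<lambda>p. (fst p, snd (snd p)))) \<and>
         (\<forall>t\<in>{0..1}. F (gen_geodesic P t) \<le>
            ereal (1 - t) * F \<mu>2 + ereal t * F \<mu>3
            - ereal (lam / 2 * t * (1 - t) *
                     (\<integral>p. (norm (snd (snd p) - fst (snd p)))\<^sup>2 \<partial>P)))))"

definition slope :: "('a::euclidean_space measure \<Rightarrow> ereal) \<Rightarrow> 'a measure \<Rightarrow> ereal" where
  "slope F \<mu> = (if F \<mu> = \<infinity> then \<infinity> else
     (INF r\<in>{r::real. r > 0}. SUP \<nu>\<in>{\<nu>. P2 \<nu> \<and> 0 < W2 \<mu> \<nu> \<and> W2 \<mu> \<nu> < r}.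
         max 0 (F \<mu> - F \<nu>) / ereal (W2 \<mu> \<nu>)))"

definition standing_assumption ::
  "('a::euclidean_space measure \<Rightarrow> ereal) \<Rightarrow> real \<Rightarrow> 'a measure \<Rightarrow> bool" where
  "standing_assumption F lam \<mu>0 \<longleftrightarrow>
     proper_fun F \<and> narrow_lsc F \<and> coercive F \<and> gen_geod_convex lam F \<and> bounded_below F \<and>
     (\<forall>\<mu>. P2 \<mu> \<and> slope F \<mu> < \<infinity> \<longrightarrow> P2ac \<mu>) \<and>
     P2ac \<mu>0 \<and> slope F \<mu>0 < \<infinity>"

definition prox :: "real \<Rightarrow> ('a::euclidean_space measure \<Rightarrow> ereal) \<Rightarrow> 'a measure \<Rightarrow> 'a measure set" where
  "prox \<tau> F \<mu>h = {\<mu>. P2 \<mu> \<and> (\<forall>\<nu>. P2 \<nu> \<longrightarrow>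
      ereal ((W2 \<mu> \<mu>h)\<^sup>2 / 2) + ereal \<tau> * F \<mu> \<le> ereal ((W2 \<nu> \<mu>h)\<^sup>2 / 2) + ereal \<tau> * F \<nu>)}"

definition JKO_seq :: "real \<Rightarrow> ('a::euclidean_space measure \<Rightarrow> ereal) \<Rightarrow> 'a measure \<Rightarrow> (nat \<Rightarrow> 'a measure) \<Rightarrow> bool" where
  "JKO_seq \<tau> F \<mu>0 \<mu>s \<longleftrightarrow> \<mu>s 0 = \<mu>0 \<and> (\<forall>k. \<mu>s (Suc k) \<in> prox \<tau> F (\<mu>s k))"

definition step_idx :: "real \<Rightarrow> real \<Rightarrow> nat" where
  "step_idx \<tau> s = nat \<lfloor>s / \<tau>\<rfloor>"

definition step_frac :: "real \<Rightarrow> real \<Rightarrow> real" where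
  "step_frac \<tau> s = s / \<tau> - real (step_idx \<tau> s)"

definition disc_vel :: "real \<Rightarrow> (nat \<Rightarrow> 'a::euclidean_space \<Rightarrow> 'a) \<Rightarrow> nat \<Rightarrow> 'a \<Rightarrow> 'a" where
  "disc_vel \<tau> Ts k x = (Ts k x - x) /\<^sub>R \<tau>"

definition pc_curve :: "real \<Rightarrow> (nat \<Rightarrow> 'a::euclidean_space measure) \<Rightarrow> real \<Rightarrow> 'a measure" where
  "pc_curve \<tau> \<mu>s s = \<mu>s (step_idx \<tau> s)"

definition pc_vel :: "real \<Rightarrow> (nat \<Rightarrow> 'a::euclidean_space \<Rightarrow> 'a) \<Rightarrow> 'a \<Rightarrow> real \<Rightarrow> 'a" where
  "pc_vel \<tau> Ts x s = disc_vel \<tau> Ts (step_idx \<tau> s) x"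

definition interp_map :: "real \<Rightarrow> ('a::euclidean_space \<Rightarrow> 'a) \<Rightarrow> 'a \<Rightarrow> 'a" where
  "interp_map t T x = (1 - t) *\<^sub>R x + t *\<^sub>R T x"

definition geo_curve :: "real \<Rightarrow> (nat \<Rightarrow> 'a::euclidean_space measure) \<Rightarrow> (nat \<Rightarrow> 'a \<Rightarrow> 'a) \<Rightarrow> real \<Rightarrow> 'a measure" where
  "geo_curve \<tau> \<mu>s Ts s =
     distr (\<mu>s (step_idx \<tau> s)) borel (interp_map (step_frac \<tau> s) (Ts (step_idx \<tau> s)))"

coinductive smooth_fun :: "('b::euclidean_space \<Rightarrow> 'c::real_normed_vector) \<Rightarrow> bool" where
  "(\<forall>x. f differentiable (at x)) \<Longrightarrow>
   (\<forall>i\<in>Basis. smooth_fun (\<lambda>x. frechet_derivative f (at x) i)) \<Longrightarrow> smooth_fun f"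

text \<open>C_c^\<infinity>(R^d x [0,T]; R^d): restrictions of compactly supported smooth functions
  on R^d x R.\<close>
definition test_fun :: "('a::euclidean_space \<times> real \<Rightarrow> 'a) \<Rightarrow> bool" where
  "test_fun \<phi> \<longleftrightarrow> smooth_fun \<phi> \<and> compact (closure {z. \<phi> z \<noteq> 0})"

definition pairing :: "real \<Rightarrow> (real \<Rightarrow> 'a::euclidean_space measure) \<Rightarrow> ('a \<Rightarrow> real \<Rightarrow> 'a) \<Rightarrow> ('a \<times> real \<Rightarrow> 'a) \<Rightarrow> real" where
  "pairing T \<gamma> v \<phi> = (LINT t:{0..T}|lborel. (\<integral>x. inner (\<phi> (x, t)) (v x t) \<partial>(\<gamma> t)))"

definition L2_field :: "real \<Rightarrow> (real \<Rightarrow> 'a::euclidean_space measure) \<Rightarrow> ('a \<Rightarrow> real \<Rightarrow> 'a) \<Rightarrow> bool" where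
  "L2_field T \<gamma> v \<longleftrightarrow> (\<forall>t\<in>{0..T}. (\<lambda>x. v x t) \<in> borel_measurable (\<gamma> t)) \<and>
     (\<lambda>t. \<integral>\<^sup>+ x. ennreal ((norm (v x t))\<^sup>2) \<partial>(\<gamma> t)) \<in> borel_measurable borel \<and>
     (\<integral>\<^sup>+ t\<in>{0..T}. (\<integral>\<^sup>+ x. ennreal ((norm (v x t))\<^sup>2) \<partial>(\<gamma> t)) \<partial>lborel) < \<infinity>"

text \<open>Since v_\<tau>(\<cdot>,k\<tau>+t\<tau>) = v_\<tau>^k \<circ> ((1-t)Id+tT_\<tau>^k)^{-1} is only determined
  \<gamma>_\<tau>(t)-a.e., the inner integral over \<gamma>_\<tau>(t) = ((1-t)Id+tT)_# \<mu>_\<tau>^k is written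
  as the integral of the composed integrand against \<mu>_\<tau>^k.\<close>
definition geo_pairing :: "real \<Rightarrow> real \<Rightarrow> (nat \<Rightarrow> 'a::euclidean_space measure) \<Rightarrow> (nat \<Rightarrow> 'a \<Rightarrow> 'a) \<Rightarrow> ('a \<times> real \<Rightarrow> 'a) \<Rightarrow> real" where
  "geo_pairing T \<tau> \<mu>s Ts \<phi> = (LINT t:{0..T}|lborel.
     (\<integral>x. inner (\<phi> (interp_map (step_frac \<tau> t) (Ts (step_idx \<tau> t)) x, t))
                 (disc_vel \<tau> Ts (step_idx \<tau> t) x) \<partial>(\<mu>s (step_idx \<tau> t))))"

end

theory Submission
  imports Defs
begin

lemma test_fun_bounds:
  fixes \<phi> :: "'a::euclidean_space \<times> real \<Rightarrow> 'a"
  assumes "test_fun \<phi>"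
  shows "\<exists>L\<ge>0. \<forall>z w. norm (\<phi> z - \<phi> w) \<le> L * norm (z - w)"
    and "\<exists>M\<ge>0. \<forall>z. norm (\<phi> z) \<le> M"
    and "continuous_on UNIV \<phi>"
proof -
  define K where "K = closure {z. \<phi> z \<noteq> 0}"
  have cK: "compact K" using assms unfolding test_fun_def K_def by auto
  have sm: "smooth_fun \<phi>" using assms unfolding test_fun_def by auto
  have diff: "\<And>z. \<phi> differentiable (at z)" using sm by (cases rule: smooth_fun.cases) auto
  have cont: "continuous_on UNIV \<phi>"
    using diff by (simp add: continuous_at_imp_continuous_on differentiable_imp_continuous_within)
  then show "continuous_on UNIV \<phi>" .
  have out: "\<And>z. z \<notin> K \<Longrightarrow> \<phi> z = 0" unfolding K_def by (metis (mono_tags) closure_subset mem_Collect_eq subsetD)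
  have psm: "\<And>i. i \<in> Basis \<Longrightarrow> smooth_fun (\<lambda>z. frechet_derivative \<phi> (at z) i)"
    using sm by (cases rule: smooth_fun.cases) auto
  have pcont: "continuous_on UNIV (\<lambda>z. frechet_derivative \<phi> (at z) i)" if "i \<in> Basis" for i
  proof -
    have "\<And>z. (\<lambda>z. frechet_derivative \<phi> (at z) i) differentiable (at z)"
      using psm[OF that] by (cases rule: smooth_fun.cases) auto
    then show ?thesis
      by (simp add: continuous_at_imp_continuous_on differentiable_imp_continuous_within)
  qed
  have pzero: "frechet_derivative \<phi> (at z) = (\<lambda>h. 0)" if "z \<notin> K" for z
  proof -
    have oK: "open (- K)" using cK compact_imp_closed by blast
    have "((\<lambda>_. 0) has_derivative (\<lambda>h. 0)) (at z)" by simp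
    then have "(\<phi> has_derivative (\<lambda>h. 0)) (at z)"
      by (rule has_derivative_transform_within_open[where s="- K"]) (use oK that out in auto)
    then show ?thesis using frechet_derivative_at by metis
  qed
  have pb: "\<exists>B. \<forall>z. norm (frechet_derivative \<phi> (at z) i) \<le> B" if "i \<in> Basis" for i
  proof -
    have "compact ((\<lambda>z. frechet_derivative \<phi> (at z) i) ` K)"
      using compact_continuous_image[OF continuous_on_subset[OF pcont[OF that]] cK] by auto
    then obtain B where B: "\<And>y. y \<in> (\<lambda>z. frechet_derivative \<phi> (at z) i) ` K \<Longrightarrow> norm y \<le> B"
      using compact_imp_bounded bounded_iff by metis
    have "norm (frechet_derivative \<phi> (at z) i) \<le> max B 0" for z
      using B[of "frechet_derivative \<phi> (at z) i"] pzero[of z] by (cases "z \<in> K") auto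
    then show ?thesis by blast
  qed
  then obtain B where B: "\<And>i z. i \<in> Basis \<Longrightarrow> norm (frechet_derivative \<phi> (at z) i) \<le> B i"
    by metis
  define L where "L = (\<Sum>i\<in>Basis. B i)"
  have L0: "L \<ge> 0" unfolding L_def
    by (rule sum_nonneg) (meson B norm_ge_zero order_trans)
  have hd: "(\<phi> has_derivative frechet_derivative \<phi> (at z)) (at z)" for z
    using diff frechet_derivative_works by blast
  have on: "onorm (frechet_derivative \<phi> (at z)) \<le> L" for z
  proof (rule onorm_le)
    fix h :: "'a \<times> real"
    have lin: "linear (frechet_derivative \<phi> (at z))"
      using hd[of z] has_derivative_linear by blast
    have "frechet_derivative \<phi> (at z) h = frechet_derivative \<phi> (at z) (\<Sum>i\<in>Basis. (h \<bullet> i) *\<^sub>R i)"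
      by (simp add: euclidean_representation)
    also have "\<dots> = (\<Sum>i\<in>Basis. (h \<bullet> i) *\<^sub>R frechet_derivative \<phi> (at z) i)"
      using lin by (simp add: linear_sum linear_scale)
    finally have "norm (frechet_derivative \<phi> (at z) h) \<le> (\<Sum>i\<in>Basis. norm ((h \<bullet> i) *\<^sub>R frechet_derivative \<phi> (at z) i))"
      by (metis norm_sum)
    also have "\<dots> \<le> (\<Sum>i\<in>Basis. norm h * B i)"
    proof (rule sum_mono)
      fix i :: "'a \<times> real" assume i: "i \<in> Basis"
      have "\<bar>h \<bullet> i\<bar> \<le> norm h" using i Basis_le_norm by blast
      then show "norm ((h \<bullet> i) *\<^sub>R frechet_derivative \<phi> (at z) i) \<le> norm h * B i"
        using B[OF i, of z] by (simp add: mult_mono)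
    qed
    also have "\<dots> = L * norm h" unfolding L_def by (simp add: sum_distrib_left mult.commute)
    finally show "norm (frechet_derivative \<phi> (at z) h) \<le> L * norm h" .
  qed
  have "norm (\<phi> z - \<phi> w) \<le> L * norm (z - w)" for z w
    by (rule differentiable_bound[where S=UNIV and f'="\<lambda>z. frechet_derivative \<phi> (at z)"])
       (use hd on in auto)
  then show "\<exists>L\<ge>0. \<forall>z w. norm (\<phi> z - \<phi> w) \<le> L * norm (z - w)" using L0 by blast
  have "compact (\<phi> ` K)" using compact_continuous_image[OF continuous_on_subset[OF cont] cK] by auto
  then obtain M where M: "\<And>y. y \<in> \<phi> ` K \<Longrightarrow> norm y \<le> M"
    using compact_imp_bounded bounded_iff by metis
  have "norm (\<phi> z) \<le> max M 0" for z using M[of "\<phi> z"] out[of z] by (cases "z \<in> K") auto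
  then show "\<exists>M\<ge>0. \<forall>z. norm (\<phi> z) \<le> M" by (meson max.cobounded2)
qed


lemma borel_prod_eq: "(borel \<Otimes>\<^sub>M borel) = (borel :: ('a::euclidean_space \<times> 'b::euclidean_space) measure)"
  by (metis borel_prod)

lemma meas_fst_borel[measurable]: "fst \<in> borel_measurable (borel :: ('a::euclidean_space \<times> 'b::euclidean_space) measure)"
  by (metis borel_prod_eq measurable_fst)
lemma meas_snd_borel[measurable]: "snd \<in> borel_measurable (borel :: ('a::euclidean_space \<times> 'b::euclidean_space) measure)"
  by (metis borel_prod_eq measurable_snd)
lemma meas_to_prod: "f \<in> measurable M (borel \<Otimes>\<^sub>M borel) \<Longrightarrow> f \<in> measurable M (borel :: ('a::euclidean_space \<times> 'b::euclidean_space) measure)"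
  by (metis borel_prod_eq)
lemma sets_borel_prod: "sets (borel \<Otimes>\<^sub>M borel) = sets (borel :: ('a::euclidean_space \<times> 'b::euclidean_space) measure)"
  by (metis borel_prod_eq)

lemma W2sq_self:
  fixes \<mu> :: "'a::euclidean_space measure"
  assumes "P2 \<mu>" shows "W2sq \<mu> \<mu> = 0"
proof -
  have sb: "sets \<mu> = sets borel" and ps: "prob_space \<mu>" using assms unfolding P2_def by auto
  define \<pi> where "\<pi> = distr \<mu> borel (\<lambda>x. (x, x))"
  have m0: "(\<lambda>x. (x, x)) \<in> measurable \<mu> (borel \<Otimes>\<^sub>M borel)"
    by (intro measurable_Pair measurable_ident_sets) (auto simp: sb)
  then have m: "(\<lambda>x. (x, x)) \<in> measurable \<mu> borel" by (rule meas_to_prod)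
  have "\<pi> \<in> couplings \<mu> \<mu>"
    unfolding couplings_def \<pi>_def
  proof (intro CollectI conjI)
    show "prob_space (distr \<mu> borel (\<lambda>x. (x, x)))" using ps m by (simp add: prob_space.prob_space_distr)
    show "sets (distr \<mu> borel (\<lambda>x. (x, x))) = sets borel" by simp
    show "distr (distr \<mu> borel (\<lambda>x. (x, x))) borel fst = \<mu>"
      using m by (subst distr_distr) (auto simp: comp_def distr_id2[OF sb[symmetric]])
    show "distr (distr \<mu> borel (\<lambda>x. (x, x))) borel snd = \<mu>"
      using m by (subst distr_distr) (auto simp: comp_def distr_id2[OF sb[symmetric]])
  qed
  moreover have "transport_cost \<pi> = 0"
    unfolding transport_cost_def \<pi>_def using m by (subst nn_integral_distr) auto
  ultimately have "W2sq \<mu> \<mu> \<le> 0" unfolding W2sq_def by (metis INF_lower)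
  then show ?thesis by simp
qed

lemma W2_self: "P2 \<mu> \<Longrightarrow> W2 \<mu> \<mu> = 0"
  unfolding W2_def by (simp add: W2sq_self)

lemma W2sq_sym_le:
  fixes \<mu> \<nu> :: "'a::euclidean_space measure"
  shows "W2sq \<nu> \<mu> \<le> W2sq \<mu> \<nu>"
  unfolding W2sq_def
proof (rule INF_greatest)
  fix \<pi> assume \<pi>: "\<pi> \<in> couplings \<mu> \<nu>"
  have sb: "sets \<pi> = sets borel" and ps: "prob_space \<pi>" and m1: "distr \<pi> borel fst = \<mu>"
    and m2: "distr \<pi> borel snd = \<nu>" using \<pi> unfolding couplings_def by auto
  have sw0: "(\<lambda>p. (snd p, fst p)) \<in> measurable (borel \<Otimes>\<^sub>M borel) (borel \<Otimes>\<^sub>M borel)"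
    by measurable
  have sw: "(\<lambda>p. (snd p, fst p)) \<in> measurable \<pi> borel"
    using meas_to_prod[OF sw0] measurable_cong_sets[OF sb refl] by (metis borel_prod_eq)
  define \<sigma> where "\<sigma> = distr \<pi> borel (\<lambda>p. (snd p, fst p))"
  have "\<sigma> \<in> couplings \<nu> \<mu>"
    unfolding couplings_def \<sigma>_def
  proof (intro CollectI conjI)
    show "prob_space (distr \<pi> borel (\<lambda>p. (snd p, fst p)))" using ps sw by (simp add: prob_space.prob_space_distr)
    show "sets (distr \<pi> borel (\<lambda>p. (snd p, fst p))) = sets borel" by simp
    show "distr (distr \<pi> borel (\<lambda>p. (snd p, fst p))) borel fst = \<nu>"
      using sw m2 by (subst distr_distr) (auto simp: comp_def)
    show "distr (distr \<pi> borel (\<lambda>p. (snd p, fst p))) borel snd = \<mu>"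
      using sw m1 by (subst distr_distr) (auto simp: comp_def)
  qed
  moreover have "transport_cost \<sigma> = transport_cost \<pi>"
    unfolding transport_cost_def \<sigma>_def using sw by (subst nn_integral_distr) (auto simp: dist_commute)
  ultimately show "(INF \<pi>\<in>couplings \<nu> \<mu>. transport_cost \<pi>) \<le> transport_cost \<pi>" by (metis INF_lower)
qed

lemma W2sq_sym: "W2sq \<nu> \<mu> = W2sq \<mu> \<nu>"
  by (simp add: W2sq_sym_le antisym)

lemma W2sq_finite:
  fixes \<mu> \<nu> :: "'a::euclidean_space measure"
  assumes "P2 \<mu>" "P2 \<nu>" shows "W2sq \<mu> \<nu> < \<infinity>"
proof -
  have sb1: "sets \<mu> = sets borel" and ps1: "prob_space \<mu>"
   and f1: "(\<integral>\<^sup>+ x. ennreal ((norm x)\<^sup>2) \<partial>\<mu>) < \<infinity>" using assms unfolding P2_def by auto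
  have sb2: "sets \<nu> = sets borel" and ps2: "prob_space \<nu>"
   and f2: "(\<integral>\<^sup>+ x. ennreal ((norm x)\<^sup>2) \<partial>\<nu>) < \<infinity>" using assms unfolding P2_def by auto
  interpret P1: prob_space \<mu> by fact
  interpret P2': prob_space \<nu> by fact
  interpret PP: pair_prob_space \<mu> \<nu> ..
  define \<pi> where "\<pi> = \<mu> \<Otimes>\<^sub>M \<nu>"
  have sp: "sets \<pi> = sets borel" unfolding \<pi>_def
    using sets_pair_measure_cong[OF sb1 sb2] sets_borel_prod by metis
  have "\<pi> \<in> couplings \<mu> \<nu>"
    unfolding couplings_def
  proof (intro CollectI conjI)
    show "prob_space \<pi>" unfolding \<pi>_def by (simp add: PP.prob_space_axioms)
    show "sets \<pi> = sets borel" by fact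
    have "distr \<pi> borel fst = distr \<pi> \<mu> fst" by (rule distr_cong) (auto simp: sb1)
    also have "\<dots> = \<mu>" unfolding \<pi>_def by (rule P2'.distr_pair_fst)
    finally show "distr \<pi> borel fst = \<mu>" .
    have "distr \<pi> borel snd = distr \<pi> \<nu> snd" by (rule distr_cong) (auto simp: sb2)
    also have "\<dots> = \<nu>"
    proof (intro measure_eqI)
      fix A assume A: "A \<in> sets (distr \<pi> \<nu> snd)"
      from A have "emeasure (distr \<pi> \<nu> snd) A = emeasure (\<mu> \<Otimes>\<^sub>M \<nu>) (space \<mu> \<times> A)"
        unfolding \<pi>_def
        by (auto simp add: emeasure_distr space_pair_measure dest: sets.sets_into_space intro!: arg_cong2[where f=emeasure])
      with A show "emeasure (distr \<pi> \<nu> snd) A = emeasure \<nu> A"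
        by (simp add: P2'.emeasure_pair_measure_Times[OF sets.top] P1.emeasure_space_1)
    qed simp
    finally show "distr \<pi> borel snd = \<nu>" .
  qed
  then have "W2sq \<mu> \<nu> \<le> transport_cost \<pi>" unfolding W2sq_def by (metis INF_lower)
  also have "transport_cost \<pi> \<le> (\<integral>\<^sup>+ p. ennreal (2 * (norm (fst p))\<^sup>2) + ennreal (2 * (norm (snd p))\<^sup>2) \<partial>\<pi>)"
    unfolding transport_cost_def
  proof (rule nn_integral_mono)
    fix p :: "'a \<times> 'a"
    have "dist (fst p) (snd p) \<le> norm (fst p) + norm (snd p)" by (simp add: dist_norm norm_triangle_ineq4)
    then have "(dist (fst p) (snd p))\<^sup>2 \<le> (norm (fst p) + norm (snd p))\<^sup>2"
      by (simp add: power_mono)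
    also have "\<dots> \<le> 2 * (norm (fst p))\<^sup>2 + 2 * (norm (snd p))\<^sup>2"
      using sum_squares_bound[of "norm (fst p)" "norm (snd p)"] by (simp add: power2_sum)
    finally show "ennreal ((dist (fst p) (snd p))\<^sup>2) \<le> ennreal (2 * (norm (fst p))\<^sup>2) + ennreal (2 * (norm (snd p))\<^sup>2)"
      by (simp add: ennreal_plus[symmetric] del: ennreal_plus)
  qed
  also have "\<dots> = (\<integral>\<^sup>+ p. ennreal (2 * (norm (fst p))\<^sup>2) \<partial>\<pi>) + (\<integral>\<^sup>+ p. ennreal (2 * (norm (snd p))\<^sup>2) \<partial>\<pi>)"
    by (rule nn_integral_add) (auto simp: measurable_cong_sets[OF sp refl])
  also have "(\<integral>\<^sup>+ p. ennreal (2 * (norm (fst p))\<^sup>2) \<partial>\<pi>) = (\<integral>\<^sup>+ x. ennreal (2 * (norm x)\<^sup>2) \<partial>\<mu>)"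
  proof -
    have "(\<integral>\<^sup>+ p. ennreal (2 * (norm (fst p))\<^sup>2) \<partial>\<pi>) = (\<integral>\<^sup>+ x. ennreal (2 * (norm x)\<^sup>2) \<partial>distr \<pi> borel fst)"
      by (subst nn_integral_distr) (auto simp: measurable_cong_sets[OF sp refl])
    then show ?thesis using \<open>\<pi> \<in> couplings \<mu> \<nu>\<close> unfolding couplings_def by simp
  qed
  also have "(\<integral>\<^sup>+ p. ennreal (2 * (norm (snd p))\<^sup>2) \<partial>\<pi>) = (\<integral>\<^sup>+ x. ennreal (2 * (norm x)\<^sup>2) \<partial>\<nu>)"
  proof -
    have "(\<integral>\<^sup>+ p. ennreal (2 * (norm (snd p))\<^sup>2) \<partial>\<pi>) = (\<integral>\<^sup>+ x. ennreal (2 * (norm x)\<^sup>2) \<partial>distr \<pi> borel snd)"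
      by (subst nn_integral_distr) (auto simp: measurable_cong_sets[OF sp refl])
    then show ?thesis using \<open>\<pi> \<in> couplings \<mu> \<nu>\<close> unfolding couplings_def by simp
  qed
  also have "(\<integral>\<^sup>+ x. ennreal (2 * (norm x)\<^sup>2) \<partial>\<mu>) = 2 * (\<integral>\<^sup>+ x. ennreal ((norm x)\<^sup>2) \<partial>\<mu>)"
    by (subst nn_integral_cmult[symmetric]) (auto simp: ennreal_mult measurable_cong_sets[OF sb1 refl])
  also have "(\<integral>\<^sup>+ x. ennreal (2 * (norm x)\<^sup>2) \<partial>\<nu>) = 2 * (\<integral>\<^sup>+ x. ennreal ((norm x)\<^sup>2) \<partial>\<nu>)"
    by (subst nn_integral_cmult[symmetric]) (auto simp: ennreal_mult measurable_cong_sets[OF sb2 refl])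
  also have "2 * (\<integral>\<^sup>+ x. ennreal ((norm x)\<^sup>2) \<partial>\<mu>) + 2 * (\<integral>\<^sup>+ x. ennreal ((norm x)\<^sup>2) \<partial>\<nu>) < \<infinity>"
    using f1 f2 by (simp add: ennreal_mult_less_top)
  finally show ?thesis .
qed


lemma ereal_step_aux:
  fixes x :: ereal
  assumes "ereal a + ereal t * x \<le> ereal 0 + ereal t * ereal b" "t > 0" "ereal c \<le> x"
  shows "\<exists>r. x = ereal r \<and> a + t * r \<le> t * b"
proof (cases x)
  case (real r) then show ?thesis using assms by auto
next
  case PInf then show ?thesis using assms by auto
next
  case MInf then show ?thesis using assms by auto
qed

lemma energy:
  fixes F :: "'a::euclidean_space measure \<Rightarrow> ereal"
  assumes jko: "JKO_seq \<tau> F \<mu>0 \<mu>s" and tau: "\<tau> > 0" and p0: "P2 \<mu>0" and f0: "F \<mu>0 \<noteq> \<infinity>"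
    and bb: "\<And>\<mu>. P2 \<mu> \<Longrightarrow> ereal c \<le> F \<mu>"
  shows "\<And>k. P2 (\<mu>s k)"
    and "\<And>n. (\<Sum>k<n. (W2 (\<mu>s (Suc k)) (\<mu>s k))\<^sup>2) \<le> 2 * \<tau> * (real_of_ereal (F \<mu>0) - c)"
proof -
  have s0: "\<mu>s 0 = \<mu>0" and sS: "\<And>k. \<mu>s (Suc k) \<in> prox \<tau> F (\<mu>s k)"
    using jko unfolding JKO_seq_def by auto
  show P: "P2 (\<mu>s k)" for k
    by (cases k) (use s0 p0 sS in \<open>auto simp: prox_def\<close>)
  define f where "f k = real_of_ereal (F (\<mu>s k))" for k
  have fin: "F (\<mu>s k) = ereal (f k)" for k
  proof (induction k)
    case 0
    have "F \<mu>0 \<noteq> -\<infinity>" using bb[OF p0] by auto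
    then show ?case using f0 s0 unfolding f_def by (cases "F \<mu>0") auto
  next
    case (Suc k)
    have "ereal ((W2 (\<mu>s (Suc k)) (\<mu>s k))\<^sup>2 / 2) + ereal \<tau> * F (\<mu>s (Suc k))
        \<le> ereal ((W2 (\<mu>s k) (\<mu>s k))\<^sup>2 / 2) + ereal \<tau> * F (\<mu>s k)"
      using sS[of k] P[of k] unfolding prox_def by auto
    then have "ereal ((W2 (\<mu>s (Suc k)) (\<mu>s k))\<^sup>2 / 2) + ereal \<tau> * F (\<mu>s (Suc k))
        \<le> ereal 0 + ereal \<tau> * ereal (f k)"
      using W2_self[OF P[of k]] Suc by simp
    from ereal_step_aux[OF this tau bb[OF P]] show ?case unfolding f_def by auto
  qed
  have ineq: "(W2 (\<mu>s (Suc k)) (\<mu>s k))\<^sup>2 / 2 + \<tau> * f (Suc k) \<le> \<tau> * f k" for k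
  proof -
    have "ereal ((W2 (\<mu>s (Suc k)) (\<mu>s k))\<^sup>2 / 2) + ereal \<tau> * F (\<mu>s (Suc k))
        \<le> ereal ((W2 (\<mu>s k) (\<mu>s k))\<^sup>2 / 2) + ereal \<tau> * F (\<mu>s k)"
      using sS[of k] P[of k] unfolding prox_def by auto
    then show ?thesis using W2_self[OF P[of k]] fin[of k] fin[of "Suc k"] by simp
  qed
  have tel: "(\<Sum>k<n. (W2 (\<mu>s (Suc k)) (\<mu>s k))\<^sup>2) \<le> 2 * \<tau> * (f 0 - f n)" for n
  proof (induction n)
    case 0 then show ?case by simp
  next
    case (Suc n) then show ?case using ineq[of n] by (simp add: algebra_simps)
  qed
  fix n
  have "c \<le> f n" using bb[OF P[of n]] fin[of n] by simp
  moreover have "f 0 = real_of_ereal (F \<mu>0)" using s0 f_def by simp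
  ultimately show "(\<Sum>k<n. (W2 (\<mu>s (Suc k)) (\<mu>s k))\<^sup>2) \<le> 2 * \<tau> * (real_of_ereal (F \<mu>0) - c)"
    using tel[of n] tau by (smt (verit) mult_left_mono)
qed


lemma step_facts:
  assumes tau: "\<tau> > 0" and t: "0 \<le> t" "t \<le> T"
  shows "step_idx \<tau> t \<le> nat \<lfloor>T / \<tau>\<rfloor>"
    and "0 \<le> step_frac \<tau> t" "step_frac \<tau> t \<le> 1"
    and "real (step_idx \<tau> t) * \<tau> \<le> t" "t < real (Suc (step_idx \<tau> t)) * \<tau>"
    and "step_frac \<tau> t = t / \<tau> - real (step_idx \<tau> t)"
proof -
  have q: "0 \<le> t / \<tau>" using tau t by simp
  then have fl: "0 \<le> \<lfloor>t / \<tau>\<rfloor>" by simp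
  have r: "real (step_idx \<tau> t) = of_int \<lfloor>t / \<tau>\<rfloor>" unfolding step_idx_def using fl by simp
  show "step_idx \<tau> t \<le> nat \<lfloor>T / \<tau>\<rfloor>" unfolding step_idx_def
    using t tau by (intro nat_mono floor_mono divide_right_mono) auto
  show "step_frac \<tau> t = t / \<tau> - real (step_idx \<tau> t)" unfolding step_frac_def ..
  have a: "of_int \<lfloor>t / \<tau>\<rfloor> \<le> t / \<tau>" "t / \<tau> < of_int \<lfloor>t / \<tau>\<rfloor> + 1" by linarith+
  show "0 \<le> step_frac \<tau> t" "step_frac \<tau> t \<le> 1" by (simp_all only: step_frac_def r) (use a in linarith)+
  show "real (step_idx \<tau> t) * \<tau> \<le> t" using mult_right_mono[OF a(1), of \<tau>] r tau by simp
  show "t < real (Suc (step_idx \<tau> t)) * \<tau>" using a r tau by (simp add: divide_less_eq algebra_simps)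
qed

lemma le_1_sq: "(y::real) \<le> 1 + y\<^sup>2"
proof (cases "y \<le> 1")
  case True then show ?thesis using zero_le_power2[of y] by linarith
next
  case False
  then have "y * 1 \<le> y * y" by (intro mult_left_mono) auto
  then show ?thesis by (simp add: power2_eq_square)
qed

lemma step_idx_meas: "step_idx \<tau> \<in> measurable borel (count_space UNIV)"
  unfolding step_idx_def by measurable

context
  fixes \<tau> :: real and \<mu>s :: "nat \<Rightarrow> 'a::euclidean_space measure" and Ts :: "nat \<Rightarrow> 'a \<Rightarrow> 'a"
  assumes tau: "\<tau> > 0" and P: "\<And>k. P2 (\<mu>s k)"
    and opt: "\<And>k. optimal_map (\<mu>s k) (\<mu>s (Suc k)) (Ts k)"
begin

lemma sbk: "sets (\<mu>s k) = sets borel" using P[of k] unfolding P2_def by auto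
lemma psk: "prob_space (\<mu>s k)" using P[of k] unfolding P2_def by auto
lemma mTb[measurable]: "Ts k \<in> borel_measurable borel" using opt[of k] unfolding optimal_map_def by auto
lemma mT[measurable]: "Ts k \<in> borel_measurable (\<mu>s k)" using mTb measurable_cong_sets[OF sbk refl] by blast
lemma mid[measurable]: "(\<lambda>x. x) \<in> borel_measurable (\<mu>s k)" by (rule measurable_ident_sets[OF sbk])
lemma mv[measurable]: "disc_vel \<tau> Ts k \<in> borel_measurable (\<mu>s k)"
  unfolding disc_vel_def by measurable

lemma nn_v: "(\<integral>\<^sup>+ x. ennreal ((norm (disc_vel \<tau> Ts k x))\<^sup>2) \<partial>\<mu>s k)
   = ennreal ((W2 (\<mu>s (Suc k)) (\<mu>s k))\<^sup>2 / \<tau>\<^sup>2)"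
proof -
  have fin: "W2sq (\<mu>s (Suc k)) (\<mu>s k) < \<infinity>" using W2sq_finite P by blast
  have W: "(W2 (\<mu>s (Suc k)) (\<mu>s k))\<^sup>2 = enn2real (W2sq (\<mu>s (Suc k)) (\<mu>s k))"
    unfolding W2_def by simp
  have e: "W2sq (\<mu>s k) (\<mu>s (Suc k)) = ennreal ((W2 (\<mu>s (Suc k)) (\<mu>s k))\<^sup>2)"
    using fin W W2sq_sym[of "\<mu>s k" "\<mu>s (Suc k)"] by (simp add: less_top)
  have "(\<integral>\<^sup>+ x. ennreal ((norm (disc_vel \<tau> Ts k x))\<^sup>2) \<partial>\<mu>s k)
     = (\<integral>\<^sup>+ x. ennreal (1 / \<tau>\<^sup>2) * ennreal ((dist (Ts k x) x)\<^sup>2) \<partial>\<mu>s k)"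
    using tau by (intro nn_integral_cong) (simp add: disc_vel_def dist_norm ennreal_mult''[symmetric] power_divide divide_simps)
  also have "\<dots> = ennreal (1 / \<tau>\<^sup>2) * (\<integral>\<^sup>+ x. ennreal ((dist (Ts k x) x)\<^sup>2) \<partial>\<mu>s k)"
    using mT by (intro nn_integral_cmult) measurable
  also have "(\<integral>\<^sup>+ x. ennreal ((dist (Ts k x) x)\<^sup>2) \<partial>\<mu>s k) = W2sq (\<mu>s k) (\<mu>s (Suc k))"
    using opt[of k] unfolding optimal_map_def by auto
  finally show ?thesis using e by (simp add: ennreal_mult''[symmetric])
qed

lemma int_v2: "integrable (\<mu>s k) (\<lambda>x. (norm (disc_vel \<tau> Ts k x))\<^sup>2)"
  and int_v2_eq: "(\<integral>x. (norm (disc_vel \<tau> Ts k x))\<^sup>2 \<partial>\<mu>s k) = (W2 (\<mu>s (Suc k)) (\<mu>s k))\<^sup>2 / \<tau>\<^sup>2"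
proof -
  show i: "integrable (\<mu>s k) (\<lambda>x. (norm (disc_vel \<tau> Ts k x))\<^sup>2)"
    by (rule integrableI_nonneg) (use mv nn_v in auto)
  have "(\<integral>x. (norm (disc_vel \<tau> Ts k x))\<^sup>2 \<partial>\<mu>s k) = enn2real (\<integral>\<^sup>+ x. ennreal ((norm (disc_vel \<tau> Ts k x))\<^sup>2) \<partial>\<mu>s k)"
    by (rule integral_eq_nn_integral) (use mv in auto)
  then show "(\<integral>x. (norm (disc_vel \<tau> Ts k x))\<^sup>2 \<partial>\<mu>s k) = (W2 (\<mu>s (Suc k)) (\<mu>s k))\<^sup>2 / \<tau>\<^sup>2"
    using nn_v by simp
qed

lemma int_v1: "integrable (\<mu>s k) (\<lambda>x. norm (disc_vel \<tau> Ts k x))"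
proof -
  interpret prob_space "\<mu>s k" by (rule psk)
  have i1: "integrable (\<mu>s k) (\<lambda>x. 1 + (norm (disc_vel \<tau> Ts k x))\<^sup>2)"
    using int_v2 by simp
  have m: "(\<lambda>x. norm (disc_vel \<tau> Ts k x)) \<in> borel_measurable (\<mu>s k)" by measurable
  have b: "norm (norm (disc_vel \<tau> Ts k x)) \<le> norm (1 + (norm (disc_vel \<tau> Ts k x))\<^sup>2)" for x
  proof -
    have "norm (disc_vel \<tau> Ts k x) \<le> 1 + (norm (disc_vel \<tau> Ts k x))\<^sup>2"
      by (rule le_1_sq)
    then show ?thesis by simp
  qed
  show ?thesis by (rule Bochner_Integration.integrable_bound[OF i1 m]) (simp add: le_1_sq)
qed

end


context
  fixes \<tau> :: real and \<mu>s :: "nat \<Rightarrow> 'a::euclidean_space measure" and Ts :: "nat \<Rightarrow> 'a \<Rightarrow> 'a"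
    and \<phi> :: "'a \<times> real \<Rightarrow> 'a" and L M :: real
  assumes tau: "\<tau> > 0" and P: "\<And>k. P2 (\<mu>s k)"
    and opt: "\<And>k. optimal_map (\<mu>s k) (\<mu>s (Suc k)) (Ts k)"
    and Lip: "\<And>z w. norm (\<phi> z - \<phi> w) \<le> L * norm (z - w)" and L0: "L \<ge> 0"
    and Mb: "\<And>z. norm (\<phi> z) \<le> M" and M0: "M \<ge> 0"
    and cont: "continuous_on UNIV \<phi>"
begin

lemmas inst = tau P opt
lemma sbk': "sets (\<mu>s k) = sets borel" by (rule sbk[where \<tau>=\<tau> and \<mu>s=\<mu>s and Ts=Ts, OF inst])
lemma psk': "prob_space (\<mu>s k)" by (rule psk[where \<tau>=\<tau> and \<mu>s=\<mu>s and Ts=Ts, OF inst])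
lemma mTb'[measurable]: "Ts k \<in> borel_measurable borel" by (rule mTb[where \<tau>=\<tau> and \<mu>s=\<mu>s and Ts=Ts, OF inst])
lemma mT'[measurable]: "Ts k \<in> borel_measurable (\<mu>s k)" by (rule mT[where \<tau>=\<tau> and \<mu>s=\<mu>s and Ts=Ts, OF inst])
lemma mid'[measurable]: "(\<lambda>x. x) \<in> borel_measurable (\<mu>s k)" by (rule mid[where \<tau>=\<tau> and \<mu>s=\<mu>s and Ts=Ts, OF inst])
lemma mv'[measurable]: "disc_vel \<tau> Ts k \<in> borel_measurable (\<mu>s k)" by (rule mv[where \<tau>=\<tau> and \<mu>s=\<mu>s and Ts=Ts, OF inst])
lemma int_v1': "integrable (\<mu>s k) (\<lambda>x. norm (disc_vel \<tau> Ts k x))" by (rule int_v1[where \<tau>=\<tau> and \<mu>s=\<mu>s and Ts=Ts, OF inst])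
lemma int_v2': "integrable (\<mu>s k) (\<lambda>x. (norm (disc_vel \<tau> Ts k x))\<^sup>2)" by (rule int_v2[where \<tau>=\<tau> and \<mu>s=\<mu>s and Ts=Ts, OF inst])
lemma int_v2_eq': "(\<integral>x. (norm (disc_vel \<tau> Ts k x))\<^sup>2 \<partial>\<mu>s k) = (W2 (\<mu>s (Suc k)) (\<mu>s k))\<^sup>2 / \<tau>\<^sup>2"
  by (rule int_v2_eq[where \<tau>=\<tau> and \<mu>s=\<mu>s and Ts=Ts, OF inst])

definition Gk :: "nat \<Rightarrow> real \<Rightarrow> real \<Rightarrow> real" where
  "Gk k fr t = (\<integral>x. inner (\<phi> (interp_map fr (Ts k) x, t)) (disc_vel \<tau> Ts k x) \<partial>\<mu>s k)"

lemma mphi[measurable]: "\<phi> \<in> borel_measurable borel"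
  using cont by (rule borel_measurable_continuous_onI)

lemma mig: "(\<lambda>x. inner (\<phi> (interp_map fr (Ts k) x, t)) (disc_vel \<tau> Ts k x)) \<in> borel_measurable (\<mu>s k)"
  using mT' mid' mv' unfolding interp_map_def by measurable

lemma int_ig: "integrable (\<mu>s k) (\<lambda>x. inner (\<phi> (interp_map fr (Ts k) x, t)) (disc_vel \<tau> Ts k x))"
proof -
  have i1: "integrable (\<mu>s k) (\<lambda>x. M * norm (disc_vel \<tau> Ts k x))"
    using int_v1' by simp
  have b: "norm (inner (\<phi> (interp_map fr (Ts k) x, t)) (disc_vel \<tau> Ts k x)) \<le> norm (M * norm (disc_vel \<tau> Ts k x))" for x
  proof -
    have "norm (inner (\<phi> (interp_map fr (Ts k) x, t)) (disc_vel \<tau> Ts k x))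
       \<le> norm (\<phi> (interp_map fr (Ts k) x, t)) * norm (disc_vel \<tau> Ts k x)"
      by (simp add: Cauchy_Schwarz_ineq2)
    also have "\<dots> \<le> M * norm (disc_vel \<tau> Ts k x)" by (intro mult_right_mono Mb) auto
    finally show ?thesis using M0 by simp
  qed
  show ?thesis by (rule Bochner_Integration.integrable_bound[OF i1 mig]) (rule AE_I2, rule b)
qed

lemma Gk_bound: "\<bar>Gk k fr t\<bar> \<le> M * (\<integral>x. norm (disc_vel \<tau> Ts k x) \<partial>\<mu>s k)"
proof -
  have "\<bar>Gk k fr t\<bar> \<le> (\<integral>x. \<bar>inner (\<phi> (interp_map fr (Ts k) x, t)) (disc_vel \<tau> Ts k x)\<bar> \<partial>\<mu>s k)"
    unfolding Gk_def by (rule integral_abs_bound)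
  also have "\<dots> \<le> (\<integral>x. M * norm (disc_vel \<tau> Ts k x) \<partial>\<mu>s k)"
  proof (rule integral_mono)
    show "integrable (\<mu>s k) (\<lambda>x. \<bar>inner (\<phi> (interp_map fr (Ts k) x, t)) (disc_vel \<tau> Ts k x)\<bar>)"
      using int_ig by (rule integrable_abs)
    show "integrable (\<mu>s k) (\<lambda>x. M * norm (disc_vel \<tau> Ts k x))"
      using int_v1' by simp
    fix x
    have "\<bar>inner (\<phi> (interp_map fr (Ts k) x, t)) (disc_vel \<tau> Ts k x)\<bar>
       \<le> norm (\<phi> (interp_map fr (Ts k) x, t)) * norm (disc_vel \<tau> Ts k x)"
      by (simp add: Cauchy_Schwarz_ineq2)
    also have "\<dots> \<le> M * norm (disc_vel \<tau> Ts k x)" by (intro mult_right_mono Mb) auto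
    finally show "\<bar>inner (\<phi> (interp_map fr (Ts k) x, t)) (disc_vel \<tau> Ts k x)\<bar> \<le> M * norm (disc_vel \<tau> Ts k x)" .
  qed
  finally show ?thesis by simp
qed

lemma Gk_diff:
  assumes fr: "0 \<le> fr" "fr \<le> 1"
  shows "\<bar>Gk k fr t - Gk k 0 t\<bar> \<le> L * (W2 (\<mu>s (Suc k)) (\<mu>s k))\<^sup>2 / \<tau>"
proof -
  let ?v = "disc_vel \<tau> Ts k"
  have "Gk k fr t - Gk k 0 t = (\<integral>x. inner (\<phi> (interp_map fr (Ts k) x, t)) (?v x) - inner (\<phi> (interp_map 0 (Ts k) x, t)) (?v x) \<partial>\<mu>s k)"
    unfolding Gk_def by (rule Bochner_Integration.integral_diff[symmetric]) (rule int_ig)+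
  also have "\<dots> = (\<integral>x. inner (\<phi> (interp_map fr (Ts k) x, t) - \<phi> (x, t)) (?v x) \<partial>\<mu>s k)"
    by (simp add: interp_map_def inner_diff_left)
  finally have eq: "Gk k fr t - Gk k 0 t = (\<integral>x. inner (\<phi> (interp_map fr (Ts k) x, t) - \<phi> (x, t)) (?v x) \<partial>\<mu>s k)" .
  have int: "integrable (\<mu>s k) (\<lambda>x. inner (\<phi> (interp_map fr (Ts k) x, t) - \<phi> (x, t)) (?v x))"
  proof -
    have "integrable (\<mu>s k) (\<lambda>x. inner (\<phi> (interp_map fr (Ts k) x, t)) (?v x) - inner (\<phi> (interp_map 0 (Ts k) x, t)) (?v x))"
      by (intro Bochner_Integration.integrable_diff int_ig)
    then show ?thesis by (simp add: interp_map_def inner_diff_left)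
  qed
  have pw: "\<bar>inner (\<phi> (interp_map fr (Ts k) x, t) - \<phi> (x, t)) (?v x)\<bar> \<le> (L * \<tau>) * (norm (?v x))\<^sup>2" for x
  proof -
    have tv: "Ts k x - x = \<tau> *\<^sub>R ?v x" using tau by (simp add: disc_vel_def)
    have ix: "interp_map fr (Ts k) x - x = (fr * \<tau>) *\<^sub>R ?v x"
      unfolding interp_map_def using tv by (simp add: algebra_simps)
    have "\<bar>inner (\<phi> (interp_map fr (Ts k) x, t) - \<phi> (x, t)) (?v x)\<bar>
        \<le> norm (\<phi> (interp_map fr (Ts k) x, t) - \<phi> (x, t)) * norm (?v x)"
      by (simp add: Cauchy_Schwarz_ineq2)
    also have "\<dots> \<le> (L * norm ((interp_map fr (Ts k) x, t) - (x, t))) * norm (?v x)"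
      by (intro mult_right_mono Lip) auto
    also have "norm ((interp_map fr (Ts k) x, t) - (x, t)) = norm (interp_map fr (Ts k) x - x)"
      by (simp add: norm_Pair)
    also have "\<dots> = fr * \<tau> * norm (?v x)" using ix fr tau by simp
    also have "L * (fr * \<tau> * norm (?v x)) * norm (?v x) = (L * \<tau> * (norm (?v x))\<^sup>2) * fr"
      by (simp add: power2_eq_square algebra_simps)
    also have "\<dots> \<le> (L * \<tau> * (norm (?v x))\<^sup>2) * 1"
      using fr L0 tau by (intro mult_left_mono) auto
    finally show ?thesis by simp
  qed
  have "\<bar>Gk k fr t - Gk k 0 t\<bar> \<le> (\<integral>x. \<bar>inner (\<phi> (interp_map fr (Ts k) x, t) - \<phi> (x, t)) (?v x)\<bar> \<partial>\<mu>s k)"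
    unfolding eq by (rule integral_abs_bound)
  also have "\<dots> \<le> (\<integral>x. (L * \<tau>) * (norm (?v x))\<^sup>2 \<partial>\<mu>s k)"
    by (rule integral_mono) (use int int_v2' pw in auto)
  also have "\<dots> = (L * \<tau>) * ((W2 (\<mu>s (Suc k)) (\<mu>s k))\<^sup>2 / \<tau>\<^sup>2)"
    using int_v2_eq' by simp
  also have "\<dots> = L * (W2 (\<mu>s (Suc k)) (\<mu>s k))\<^sup>2 / \<tau>"
    using tau by (simp add: power2_eq_square field_simps)
  finally show ?thesis .
qed

lemma Gk_meas:
  assumes g[measurable]: "g \<in> borel_measurable borel"
  shows "(\<lambda>t. Gk k (g t) t) \<in> borel_measurable borel"
proof -
  interpret prob_space "\<mu>s k" by (rule psk')
  have "(\<lambda>(t, x). inner (\<phi> (interp_map (g t) (Ts k) x, t)) (disc_vel \<tau> Ts k x)) \<in> borel_measurable (borel \<Otimes>\<^sub>M borel)"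
    using mTb' unfolding interp_map_def disc_vel_def by measurable
  then have "(\<lambda>(t, x). inner (\<phi> (interp_map (g t) (Ts k) x, t)) (disc_vel \<tau> Ts k x)) \<in> borel_measurable (borel \<Otimes>\<^sub>M \<mu>s k)"
    using measurable_cong_sets[OF sets_pair_measure_cong[OF refl sbk'] refl] by blast
  from borel_measurable_lebesgue_integral[OF this] show ?thesis unfolding Gk_def by simp
qed

lemma gG_meas: "(\<lambda>t. Gk (step_idx \<tau> t) (step_frac \<tau> t) t) \<in> borel_measurable borel"
proof -
  have "(\<lambda>t. (\<lambda>i t. Gk i (t / \<tau> - real i) t) (step_idx \<tau> t) t) \<in> borel_measurable borel"
    by (rule measurable_compose_countable'[where I=UNIV]) (auto intro!: Gk_meas step_idx_meas)
  then show ?thesis by (simp add: step_frac_def)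
qed

lemma gP_meas: "(\<lambda>t. Gk (step_idx \<tau> t) 0 t) \<in> borel_measurable borel"
proof -
  have "(\<lambda>t. (\<lambda>i t. Gk i ((\<lambda>_. 0) t) t) (step_idx \<tau> t) t) \<in> borel_measurable borel"
    by (rule measurable_compose_countable'[where I=UNIV]) (auto intro!: Gk_meas step_idx_meas)
  then show ?thesis by simp
qed

lemma set_int_G:
  assumes g: "(\<lambda>t. Gk (step_idx \<tau> t) (fr t) t) \<in> borel_measurable borel"
  shows "set_integrable lborel {0..T} (\<lambda>t. Gk (step_idx \<tau> t) (fr t) t)"
proof -
  define B where "B = (\<Sum>k<Suc (nat \<lfloor>T / \<tau>\<rfloor>). M * (\<integral>x. norm (disc_vel \<tau> Ts k x) \<partial>\<mu>s k))"
  have bd: "\<bar>Gk (step_idx \<tau> t) (fr t) t\<bar> \<le> B" if t: "t \<in> {0..T}" for t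
  proof -
    have k: "step_idx \<tau> t \<in> {..<Suc (nat \<lfloor>T / \<tau>\<rfloor>)}" using step_facts(1)[OF tau, of t T] t by auto
    have "\<bar>Gk (step_idx \<tau> t) (fr t) t\<bar> \<le> M * (\<integral>x. norm (disc_vel \<tau> Ts (step_idx \<tau> t) x) \<partial>\<mu>s (step_idx \<tau> t))"
      by (rule Gk_bound)
    also have "\<dots> \<le> B" unfolding B_def
      by (rule member_le_sum[OF k]) (auto intro!: mult_nonneg_nonneg M0 integral_nonneg_AE)
    finally show ?thesis .
  qed
  have fin: "emeasure lborel {0..T} < \<infinity>" by (cases "0 \<le> T") auto
  show ?thesis unfolding set_integrable_def
    by (rule integrableI_bounded_set_indicator[where B=B]) (use g bd fin in auto)
qed

lemma pair_diff_bound: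
  shows "\<bar>geo_pairing T \<tau> \<mu>s Ts \<phi> - pairing T (pc_curve \<tau> \<mu>s) (pc_vel \<tau> Ts) \<phi>\<bar>
     \<le> L * (\<Sum>k<Suc (nat \<lfloor>T / \<tau>\<rfloor>). (W2 (\<mu>s (Suc k)) (\<mu>s k))\<^sup>2)"
proof -
  define N where "N = nat \<lfloor>T / \<tau>\<rfloor>"
  define gG where "gG t = Gk (step_idx \<tau> t) (step_frac \<tau> t) t" for t
  define gP where "gP t = Gk (step_idx \<tau> t) 0 t" for t
  define c where "c k = L * (W2 (\<mu>s (Suc k)) (\<mu>s k))\<^sup>2 / \<tau>" for k
  define A where "A k = {real k * \<tau> ..< real (Suc k) * \<tau>}" for k
  have im: "interp_map 0 f = (\<lambda>x. x)" for f :: "'a \<Rightarrow> 'a" by (simp add: interp_map_def fun_eq_iff)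
  have geq: "geo_pairing T \<tau> \<mu>s Ts \<phi> = (LINT t:{0..T}|lborel. gG t)"
    unfolding geo_pairing_def gG_def Gk_def ..
  have peq: "pairing T (pc_curve \<tau> \<mu>s) (pc_vel \<tau> Ts) \<phi> = (LINT t:{0..T}|lborel. gP t)"
    unfolding pairing_def gP_def Gk_def pc_curve_def pc_vel_def im ..
  have iG: "set_integrable lborel {0..T} gG"
    unfolding gG_def by (rule set_int_G) (rule gG_meas)
  have iP: "set_integrable lborel {0..T} gP"
    unfolding gP_def by (rule set_int_G) (rule gP_meas)
  have iD: "integrable lborel (\<lambda>t. indicator {0..T} t *\<^sub>R (gG t - gP t))"
    using set_integral_diff(1)[OF iG iP] unfolding set_integrable_def .
  have c0: "0 \<le> c k" for k unfolding c_def using L0 tau by simp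
  have "geo_pairing T \<tau> \<mu>s Ts \<phi> - pairing T (pc_curve \<tau> \<mu>s) (pc_vel \<tau> Ts) \<phi>
      = (LINT t:{0..T}|lborel. gG t - gP t)"
    unfolding geq peq by (rule set_integral_diff(2)[OF iG iP, symmetric])
  also have "\<dots> = (\<integral>t. indicator {0..T} t *\<^sub>R (gG t - gP t) \<partial>lborel)"
    unfolding set_lebesgue_integral_def ..
  finally have eq: "geo_pairing T \<tau> \<mu>s Ts \<phi> - pairing T (pc_curve \<tau> \<mu>s) (pc_vel \<tau> Ts) \<phi>
      = (\<integral>t. indicator {0..T} t *\<^sub>R (gG t - gP t) \<partial>lborel)" .
  have pw: "\<bar>indicator {0..T} t *\<^sub>R (gG t - gP t)\<bar> \<le> (\<Sum>k<Suc N. c k * indicator (A k) t)" for t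
  proof (cases "t \<in> {0..T}")
    case True
    let ?k = "step_idx \<tau> t"
    have t: "0 \<le> t" "t \<le> T" using True by auto
    have kN: "?k \<in> {..<Suc N}" using step_facts(1)[OF tau t] unfolding N_def by auto
    have tA: "t \<in> A ?k" unfolding A_def using step_facts(4,5)[OF tau t] by auto
    have "\<bar>indicator {0..T} t *\<^sub>R (gG t - gP t)\<bar> = \<bar>gG t - gP t\<bar>" using True by simp
    also have "\<dots> \<le> c ?k" unfolding gG_def gP_def c_def
      by (rule Gk_diff) (use step_facts(2,3)[OF tau t] in auto)
    also have "\<dots> = c ?k * indicator (A ?k) t" using tA by simp
    also have "\<dots> \<le> (\<Sum>k<Suc N. c k * indicator (A k) t)"
      by (rule member_le_sum[OF kN]) (auto intro!: mult_nonneg_nonneg c0)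
    finally show ?thesis .
  next
    case False
    have "0 \<le> (\<Sum>k<Suc N. c k * indicator (A k) t)" by (intro sum_nonneg mult_nonneg_nonneg c0) auto
    then show ?thesis using False by simp
  qed
  have eA: "emeasure lborel (A k) < \<infinity>" for k
    unfolding A_def using tau by (subst emeasure_lborel_Ico) (auto simp: mult_right_mono)
  have iA: "integrable lborel (\<lambda>t. c k * indicator (A k) t)" for k
    using eA[of k] unfolding A_def by (intro integrable_mult_right integrable_real_indicator) auto
  have iS: "integrable lborel (\<lambda>t. \<Sum>k<Suc N. c k * indicator (A k) t)"
    by (rule Bochner_Integration.integrable_sum) (rule iA)
  have "\<bar>geo_pairing T \<tau> \<mu>s Ts \<phi> - pairing T (pc_curve \<tau> \<mu>s) (pc_vel \<tau> Ts) \<phi>\<bar>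
      \<le> (\<integral>t. \<bar>indicator {0..T} t *\<^sub>R (gG t - gP t)\<bar> \<partial>lborel)"
    unfolding eq by (rule integral_abs_bound)
  also have "\<dots> \<le> (\<integral>t. (\<Sum>k<Suc N. c k * indicator (A k) t) \<partial>lborel)"
    by (rule integral_mono[OF integrable_abs[OF iD] iS pw])
  also have "\<dots> = (\<Sum>k<Suc N. c k * measure lborel (A k))"
    using iA by (subst Bochner_Integration.integral_sum) auto
  also have "\<dots> = (\<Sum>k<Suc N. L * (W2 (\<mu>s (Suc k)) (\<mu>s k))\<^sup>2)"
  proof (rule sum.cong)
    fix k
    have "measure lborel (A k) = \<tau>" unfolding A_def using tau by (simp add: algebra_simps)
    then show "c k * measure lborel (A k) = L * (W2 (\<mu>s (Suc k)) (\<mu>s k))\<^sup>2" unfolding c_def using tau by simp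
  qed simp
  also have "\<dots> = L * (\<Sum>k<Suc (nat \<lfloor>T / \<tau>\<rfloor>). (W2 (\<mu>s (Suc k)) (\<mu>s k))\<^sup>2)"
    unfolding N_def by (simp only: sum_distrib_left)
  finally show ?thesis .
qed

end


theorem mainTheorem3:
  fixes F :: "'a::euclidean_space measure \<Rightarrow> ereal"
    and lam :: real and \<mu>0 :: "'a measure" and T :: real
    and \<tau> :: "nat \<Rightarrow> real"
    and \<mu> :: "nat \<Rightarrow> nat \<Rightarrow> 'a measure"
    and Tm :: "nat \<Rightarrow> nat \<Rightarrow> 'a \<Rightarrow> 'a"
    and \<gamma>h :: "real \<Rightarrow> 'a measure"
    and vh :: "'a \<Rightarrow> real \<Rightarrow> 'a"
  assumes "standing_assumption F lam \<mu>0"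
    and "T > 0"
    and "\<forall>l. \<tau> l > 0" and "\<tau> \<longlonglongrightarrow> 0"
    and "\<forall>l. JKO_seq (\<tau> l) F \<mu>0 (\<mu> l)"
    and "\<forall>l k. optimal_map (\<mu> l k) (\<mu> l (Suc k)) (Tm l k)"
    and "\<forall>t\<in>{0..T}. P2 (\<gamma>h t)"
    and "L2_field T \<gamma>h vh"
    and "\<forall>l. L2_field T (pc_curve (\<tau> l) (\<mu> l)) (pc_vel (\<tau> l) (Tm l))"
    and "\<forall>\<phi>. test_fun \<phi> \<longrightarrow>
           (\<lambda>l. pairing T (pc_curve (\<tau> l) (\<mu> l)) (pc_vel (\<tau> l) (Tm l)) \<phi>)
             \<longlonglongrightarrow> pairing T \<gamma>h vh \<phi>"
  shows "\<forall>\<phi>. test_fun \<phi> \<longrightarrow>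
           (\<lambda>l. geo_pairing T (\<tau> l) (\<mu> l) (Tm l) \<phi>) \<longlonglongrightarrow> pairing T \<gamma>h vh \<phi>"
proof (intro allI impI)
  fix \<phi> :: "'a \<times> real \<Rightarrow> 'a"
  assume tf: "test_fun \<phi>"
  note sa = assms(1)[unfolded standing_assumption_def]
  obtain c :: real where c: "\<And>\<mu>. P2 \<mu> \<Longrightarrow> ereal c \<le> F \<mu>"
    using sa unfolding bounded_below_def by auto
  have p0: "P2 \<mu>0" using sa unfolding P2ac_def by auto
  have f0: "F \<mu>0 \<noteq> \<infinity>" using sa unfolding slope_def by (auto split: if_splits)
  obtain L where L0: "L \<ge> 0" and Lip: "\<And>z w. norm (\<phi> z - \<phi> w) \<le> L * norm (z - w)"
    using test_fun_bounds(1)[OF tf] by blast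
  obtain M where M0: "M \<ge> 0" and Mb: "\<And>z. norm (\<phi> z) \<le> M"
    using test_fun_bounds(2)[OF tf] by blast
  have cont: "continuous_on UNIV \<phi>" using test_fun_bounds(3)[OF tf] .
  define K where "K = L * (2 * (real_of_ereal (F \<mu>0) - c))"
  have tau: "\<And>l. \<tau> l > 0" using assms(3) by auto
  have bound: "norm (geo_pairing T (\<tau> l) (\<mu> l) (Tm l) \<phi> - pairing T (pc_curve (\<tau> l) (\<mu> l)) (pc_vel (\<tau> l) (Tm l)) \<phi>)
      \<le> K * \<tau> l" for l
  proof -
    have P: "\<And>k. P2 (\<mu> l k)" using energy(1)[of "\<tau> l" F \<mu>0 "\<mu> l" c] assms(5) tau p0 f0 c by blast
    have opt: "\<And>k. optimal_map (\<mu> l k) (\<mu> l (Suc k)) (Tm l k)" using assms(6) by blast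
    have "\<bar>geo_pairing T (\<tau> l) (\<mu> l) (Tm l) \<phi> - pairing T (pc_curve (\<tau> l) (\<mu> l)) (pc_vel (\<tau> l) (Tm l)) \<phi>\<bar>
      \<le> L * (\<Sum>k<Suc (nat \<lfloor>T / \<tau> l\<rfloor>). (W2 (\<mu> l (Suc k)) (\<mu> l k))\<^sup>2)"
      by (rule pair_diff_bound[where \<tau>="\<tau> l" and \<mu>s="\<mu> l" and Ts="Tm l" and \<phi>=\<phi> and L=L and M=M, OF tau P opt Lip L0 Mb M0 cont])
    also have "\<dots> \<le> L * (2 * \<tau> l * (real_of_ereal (F \<mu>0) - c))"
      by (intro mult_left_mono L0 energy(2)[of "\<tau> l" F \<mu>0 "\<mu> l" c]) (use assms(5) tau p0 f0 c in auto)
    also have "\<dots> = K * \<tau> l" unfolding K_def by simp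
    finally show ?thesis by simp
  qed
  have d: "(\<lambda>l. geo_pairing T (\<tau> l) (\<mu> l) (Tm l) \<phi> - pairing T (pc_curve (\<tau> l) (\<mu> l)) (pc_vel (\<tau> l) (Tm l)) \<phi>) \<longlonglongrightarrow> 0"
  proof (rule Lim_null_comparison)
    show "\<forall>\<^sub>F l in sequentially. norm (geo_pairing T (\<tau> l) (\<mu> l) (Tm l) \<phi> - pairing T (pc_curve (\<tau> l) (\<mu> l)) (pc_vel (\<tau> l) (Tm l)) \<phi>) \<le> K * \<tau> l"
      using bound by simp
    show "(\<lambda>l. K * \<tau> l) \<longlonglongrightarrow> 0" using tendsto_mult_right_zero[OF assms(4)] by simp
  qed
  have "(\<lambda>l. pairing T (pc_curve (\<tau> l) (\<mu> l)) (pc_vel (\<tau> l) (Tm l)) \<phi> +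
      (geo_pairing T (\<tau> l) (\<mu> l) (Tm l) \<phi> - pairing T (pc_curve (\<tau> l) (\<mu> l)) (pc_vel (\<tau> l) (Tm l)) \<phi>))
      \<longlonglongrightarrow> pairing T \<gamma>h vh \<phi> + 0"
    using assms(10) tf d by (intro tendsto_add) auto
  then show "(\<lambda>l. geo_pairing T (\<tau> l) (\<mu> l) (Tm l) \<phi>) \<longlonglongrightarrow> pairing T \<gamma>h vh \<phi>" by simp
qed

end
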